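(* BC, MS and FT satisfy partition consistency. VD and MF do not: for each $f\in\{\mathrm{VD},\mathrm{MF}\}$ there exists a profile $P$ for which the equivalence in the definition of partition consistency fails.
   Context: Candidates come from a fixed infinite universe; rules are defined for profiles over every finite candidate set $C$. An approval ballot is a nonempty subset $A\subseteq C$; a profile over $C$ is a finite sequence of ballots. An axis is a strict linear order $\triangleleft$ on $C$; $a\trianglelefteq b$ means $a\triangleleft b$ or $a=b$. A ballot $A$ is an interval of $\triangleleft$ if for all $a,b\in A$ and every $c$ with $a\triangleleft c\triangleleft b$ we have $c\in A$; a set $S\subseteq C$ is an interval of $\triangleleft$ in the same sense. For $C'\subseteq C$, $P_{C'}$ is the profile over $C'$ obtained by intersecting each ballot with $C'$ (ballots becoming empty are discarded), and $\triangleleft_{C'}$ is the restriction of $\triangleleft$ to $C'$. The co-approval partition $C_1,\dots,C_k$ of $P$ is the set of equivalence classes of the equivalence relation on $C$ generated by $x\sim y$ whenever some ballot of $P$ contains both $x$ and $y$ (never-approved candidates form singleton classes). A rule $f$ satisfies partition consistency if for every profile $P$ with co-approval partition $C_1,\dots,C_k$ and every axis $\triangleleft$ on $C$: $\triangleleft\in f(P)$ iff for every $j$, $C_j$ is an interval of $\triangleleft$ and $\triangleleft_{C_j}\in f(P_{C_j})$. For a cost function $\mathrm{cost}_f$, the scoring rule returns $f(P)=\arg\min_{\triangleleft}\sum_{A\in P}\mathrm{cost}_f(A,\triangleleft)$. The five rules are the scoring rules (on every $C$) with costs: $\mathrm{cost}_{\mathrm{VD}}(A,\triangleleft)=0$ if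 $A$ is an interval of $\triangleleft$ and $1$ otherwise; $\mathrm{cost}_{\mathrm{MF}}(A,\triangleleft)=\min_{x,y\in A,\ x\trianglelefteq y}\big(|\{z\in A: z\triangleleft x \text{ or } y\triangleleft z\}|+|\{z\notin A: x\triangleleft z\triangleleft y\}|\big)$; $\mathrm{cost}_{\mathrm{BC}}(A,\triangleleft)=|\{b\notin A: a\triangleleft b\triangleleft c \text{ for some } a,c\in A\}|$; $\mathrm{cost}_{\mathrm{MS}}(A,\triangleleft)=\sum_{x\in C\setminus A}\min\big(|\{y\in A:y\triangleleft x\}|,\,|\{y\in A:x\triangleleft y\}|\big)$; $\mathrm{cost}_{\mathrm{FT}}(A,\triangleleft)=\sum_{x\in C\setminus A}|\{y\in A:y\triangleleft x\}|\cdot|\{y\in A:x\triangleleft y\}|$. *)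

theory Defs
  imports Main
begin

text \<open>Candidates are elements of a type 'a (the universe); an axis on a finite
candidate set C is a strict linear order on C, represented as a relation
r \<subseteq> C \<times> C; (a,b) \<in> r means a \<triangleleft> b.\<close>

definition is_axis :: "'a set \<Rightarrow> 'a rel \<Rightarrow> bool" where
  "is_axis C r \<longleftrightarrow> strict_linear_order_on C r \<and> r \<subseteq> C \<times> C"

definition is_profile :: "'a set \<Rightarrow> 'a set list \<Rightarrow> bool" where
  "is_profile C P \<longleftrightarrow> (\<forall>A\<in>set P. A \<noteq> {} \<and> A \<subseteq> C)"

definition is_interval :: "'a rel \<Rightarrow> 'a set \<Rightarrow> bool" where
  "is_interval r S \<longleftrightarrow> (\<forall>a\<in>S. \<forall>b\<in>S. \<forall>c. (a,c) \<in> r \<and> (c,b) \<in> r \<longrightarrow> c \<in> S)"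

definition restrict_axis :: "'a rel \<Rightarrow> 'a set \<Rightarrow> 'a rel" where
  "restrict_axis r D = r \<inter> (D \<times> D)"

definition restrict_profile :: "'a set \<Rightarrow> 'a set list \<Rightarrow> 'a set list" where
  "restrict_profile D P = filter (\<lambda>A. A \<noteq> {}) (map (\<lambda>A. A \<inter> D) P)"

definition coapp_rel :: "'a set \<Rightarrow> 'a set list \<Rightarrow> 'a rel" where
  "coapp_rel C P = {(x,y). x \<in> C \<and> y \<in> C \<and> (x = y \<or> (\<exists>A\<in>set P. x \<in> A \<and> y \<in> A))}"

definition coapp_partition :: "'a set \<Rightarrow> 'a set list \<Rightarrow> 'a set set" where
  "coapp_partition C P = C // trancl (coapp_rel C P)"

type_synonym 'a rule = "'a set \<Rightarrow> 'a set list \<Rightarrow> 'a rel set"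

definition partition_consistent :: "'a rule \<Rightarrow> bool" where
  "partition_consistent f \<longleftrightarrow>
     (\<forall>C P r. finite C \<longrightarrow> is_profile C P \<longrightarrow> is_axis C r \<longrightarrow>
        (r \<in> f C P \<longleftrightarrow>
          (\<forall>D \<in> coapp_partition C P. is_interval r D \<and>
              restrict_axis r D \<in> f D (restrict_profile D P))))"

type_synonym 'a costfun = "'a set \<Rightarrow> 'a set \<Rightarrow> 'a rel \<Rightarrow> nat"

definition scoring_rule :: "'a costfun \<Rightarrow> 'a rule" where
  "scoring_rule cost C P =
     {r. is_axis C r \<and> (\<forall>r'. is_axis C r' \<longrightarrow>
          (\<Sum>A\<leftarrow>P. cost C A r) \<le> (\<Sum>A\<leftarrow>P. cost C A r'))}"

definition cost_VD :: "'a costfun" where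
  "cost_VD C A r = (if is_interval r A then 0 else 1)"

definition cost_MF :: "'a costfun" where
  "cost_MF C A r = Min ((\<lambda>(x,y). card {z \<in> A. (z,x) \<in> r \<or> (y,z) \<in> r}
                                 + card {z \<in> C - A. (x,z) \<in> r \<and> (z,y) \<in> r})
                        ` {(x,y). x \<in> A \<and> y \<in> A \<and> (x = y \<or> (x,y) \<in> r)})"

definition cost_BC :: "'a costfun" where
  "cost_BC C A r = card {b \<in> C - A. \<exists>a\<in>A. \<exists>c\<in>A. (a,b) \<in> r \<and> (b,c) \<in> r}"

definition cost_MS :: "'a costfun" where
  "cost_MS C A r = (\<Sum>x\<in>C - A. min (card {y\<in>A. (y,x) \<in> r}) (card {y\<in>A. (x,y) \<in> r}))"

definition cost_FT :: "'a costfun" where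
  "cost_FT C A r = (\<Sum>x\<in>C - A. card {y\<in>A. (y,x) \<in> r} * card {y\<in>A. (x,y) \<in> r})"

definition VD :: "'a rule" where "VD = scoring_rule cost_VD"
definition MF :: "'a rule" where "MF = scoring_rule cost_MF"
definition BC :: "'a rule" where "BC = scoring_rule cost_BC"
definition MS :: "'a rule" where "MS = scoring_rule cost_MS"
definition FT :: "'a rule" where "FT = scoring_rule cost_FT"

end

theory Submission
  imports Defs
begin

definition gcost :: "(nat \<Rightarrow> nat \<Rightarrow> nat) \<Rightarrow> 'a costfun" where
  "gcost h C A r = (\<Sum>x\<in>C - A. h (card {y\<in>A. (y,x) \<in> r}) (card {y\<in>A. (x,y) \<in> r}))"

definition extc :: "(nat \<Rightarrow> nat \<Rightarrow> nat) \<Rightarrow> 'a set \<Rightarrow> 'a set \<Rightarrow> 'a set \<Rightarrow> 'a rel \<Rightarrow> nat" where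
  "extc h C D A r = (\<Sum>x\<in>C - D. h (card {y\<in>A. (y,x) \<in> r}) (card {y\<in>A. (x,y) \<in> r}))"

definition good_h :: "(nat \<Rightarrow> nat \<Rightarrow> nat) \<Rightarrow> bool" where
  "good_h h \<longleftrightarrow> (\<forall>l m. h l m = 0 \<longleftrightarrow> l = 0 \<or> m = 0)"

lemma axis_restrict: "is_axis C r \<Longrightarrow> D \<subseteq> C \<Longrightarrow> is_axis D (restrict_axis r D)"
  unfolding is_axis_def strict_linear_order_on_def restrict_axis_def trans_def irrefl_on_def total_on_def
  by blast

lemma gcost_split:
  assumes "finite C" "D \<subseteq> C" "A \<subseteq> D"
  shows "gcost h C A r = gcost h D A (restrict_axis r D) + extc h C D A r"
proof -
  have eq: "C - A = (D - A) \<union> (C - D)" using assms by blast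
  have fin: "finite (D - A)" "finite (C - D)" using assms by (meson finite_Diff finite_subset)+
  have "gcost h C A r = (\<Sum>x\<in>D - A. h (card {y\<in>A. (y,x) \<in> r}) (card {y\<in>A. (x,y) \<in> r})) + extc h C D A r"
    unfolding gcost_def extc_def eq by (rule sum.union_disjoint) (use fin in auto)
  moreover have "(\<Sum>x\<in>D - A. h (card {y\<in>A. (y,x) \<in> r}) (card {y\<in>A. (x,y) \<in> r})) = gcost h D A (restrict_axis r D)"
    unfolding gcost_def restrict_axis_def
  proof (rule sum.cong[OF refl])
    fix x assume x: "x \<in> D - A"
    have "{y\<in>A. (y,x) \<in> r} = {y\<in>A. (y,x) \<in> r \<inter> D \<times> D}" "{y\<in>A. (x,y) \<in> r} = {y\<in>A. (x,y) \<in> r \<inter> D \<times> D}"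
      using x assms by auto
    then show "h (card {y\<in>A. (y,x) \<in> r}) (card {y\<in>A. (x,y) \<in> r}) = h (card {y\<in>A. (y,x) \<in> r \<inter> D \<times> D}) (card {y\<in>A. (x,y) \<in> r \<inter> D \<times> D})"
      by simp
  qed
  ultimately show ?thesis by simp
qed

lemma ext_zero:
  assumes "good_h h" "A \<subseteq> D" "is_interval r D"
  shows "extc h C D A r = 0"
  unfolding extc_def
proof (rule sum.neutral, rule ballI)
  fix x assume x: "x \<in> C - D"
  show "h (card {y\<in>A. (y,x) \<in> r}) (card {y\<in>A. (x,y) \<in> r}) = 0"
  proof (rule ccontr)
    assume "h (card {y\<in>A. (y,x) \<in> r}) (card {y\<in>A. (x,y) \<in> r}) \<noteq> 0"
    then have "card {y\<in>A. (y,x) \<in> r} \<noteq> 0" "card {y\<in>A. (x,y) \<in> r} \<noteq> 0"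
      using assms(1) unfolding good_h_def by auto
    then obtain y1 y2 where "y1 \<in> A" "(y1,x) \<in> r" "y2 \<in> A" "(x,y2) \<in> r"
      by (metis (no_types, lifting) card.empty empty_Collect_eq)
    then show False using assms(2,3) x unfolding is_interval_def by blast
  qed
qed

lemma ext_pos:
  assumes "good_h h" "finite C" "finite A" "x \<in> C - D" "a \<in> A" "b \<in> A" "(a,x) \<in> r" "(x,b) \<in> r"
  shows "extc h C D A r > 0"
proof -
  have f1: "finite {y\<in>A. (y,x) \<in> r}" "finite {y\<in>A. (x,y) \<in> r}" using assms(3) by simp_all
  have m: "a \<in> {y\<in>A. (y,x) \<in> r}" "b \<in> {y\<in>A. (x,y) \<in> r}" using assms(5-8) by simp_all
  have c1: "card {y\<in>A. (y,x) \<in> r} \<noteq> 0" using f1(1) m(1) by (metis card_0_eq empty_iff)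
  have c2: "card {y\<in>A. (x,y) \<in> r} \<noteq> 0" using f1(2) m(2) by (metis card_0_eq empty_iff)
  have "h (card {y\<in>A. (y,x) \<in> r}) (card {y\<in>A. (x,y) \<in> r}) \<noteq> 0"
    using assms(1) c1 c2 unfolding good_h_def by simp
  moreover have "h (card {y\<in>A. (y,x) \<in> r}) (card {y\<in>A. (x,y) \<in> r}) \<le> extc h C D A r"
    unfolding extc_def by (rule member_le_sum[OF assms(4)]) (simp_all add: assms(2))
  ultimately show ?thesis by linarith
qed

lemma axis_props: "is_axis C r \<Longrightarrow> trans r \<and> irrefl r \<and> total_on C r \<and> r \<subseteq> C \<times> C"
  unfolding is_axis_def strict_linear_order_on_def by simp

lemma axis_asym: "is_axis C r \<Longrightarrow> (x,y) \<in> r \<Longrightarrow> (y,x) \<in> r \<Longrightarrow> False"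
proof -
  assume a: "is_axis C r" "(x,y) \<in> r" "(y,x) \<in> r"
  have "trans r" "irrefl r" using axis_props[OF a(1)] by auto
  then have "(x,x) \<in> r" "(x,x) \<notin> r" using a(2,3) unfolding irrefl_on_def by (auto dest: transD)
  then show False by simp
qed

lemma conn:
  assumes "(u,v) \<in> trancl (coapp_rel C P)" "is_axis C r"
  shows "(u,x) \<in> r \<Longrightarrow> (x,v) \<in> r \<Longrightarrow> (u,x) \<notin> trancl (coapp_rel C P) \<Longrightarrow>
     \<exists>A\<in>set P. \<exists>a\<in>A. \<exists>b\<in>A. (a,x) \<in> r \<and> (x,b) \<in> r \<and> (u,a) \<in> (coapp_rel C P)\<^sup>*"
  using assms(1)
proof (induction v rule: trancl_induct)
  case (base y)
  from base.hyps have "u = y \<or> (\<exists>A\<in>set P. u \<in> A \<and> y \<in> A)" unfolding coapp_rel_def by simp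
  then show ?case
  proof
    assume "u = y" then show ?thesis using base.prems(1,2) axis_asym[OF assms(2)] by metis
  next
    assume "\<exists>A\<in>set P. u \<in> A \<and> y \<in> A"
    then obtain A where "A \<in> set P" "u \<in> A" "y \<in> A" by metis
    then show ?thesis using base.prems(1,2) rtrancl.rtrancl_refl by metis
  qed
next
  case (step y z)
  have xC: "x \<in> C" "y \<in> C" using step.hyps(2) step.prems(1) axis_props[OF assms(2)] unfolding coapp_rel_def by auto
  have tot: "total_on C r" using axis_props[OF assms(2)] by simp
  show ?case
  proof (cases "y = x")
    case True then show ?thesis using step.hyps(1) step.prems(3) by simp
  next
    case False
    then have "(x,y) \<in> r \<or> (y,x) \<in> r" using tot xC unfolding total_on_def by metis
    then show ?thesis
    proof
      assume "(x,y) \<in> r" then show ?thesis using step.IH step.prems(1,3) by metis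
    next
      assume yx: "(y,x) \<in> r"
      from step.hyps(2) have "y = z \<or> (\<exists>A\<in>set P. y \<in> A \<and> z \<in> A)" unfolding coapp_rel_def by simp
      then show ?thesis
      proof
        assume "y = z" then show ?thesis using yx step.prems(2) axis_asym[OF assms(2)] by metis
      next
        assume "\<exists>A\<in>set P. y \<in> A \<and> z \<in> A"
        then obtain A where "A \<in> set P" "y \<in> A" "z \<in> A" by metis
        moreover have "(u,y) \<in> (coapp_rel C P)\<^sup>*" using step.hyps(1) by (rule trancl_into_rtrancl)
        ultimately show ?thesis using yx step.prems(2) by metis
      qed
    qed
  qed
qed

lemma restrict_profile_filter:
  "\<forall>A\<in>set P. A \<noteq> {} \<and> (A \<subseteq> D \<or> A \<inter> D = {}) \<Longrightarrow> restrict_profile D P = filter (\<lambda>A. A \<subseteq> D) P"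
  by (induction P) (auto simp: restrict_profile_def Int_absorb2)

lemma sum_list_cong': "(\<And>x. x \<in> set xs \<Longrightarrow> f x = g x) \<Longrightarrow> (\<Sum>x\<leftarrow>xs. f x) = (\<Sum>x\<leftarrow>xs. g x)"
  by (metis map_cong)

lemma sum_list_mono': "(\<And>x. x \<in> set xs \<Longrightarrow> f x \<le> g x) \<Longrightarrow> (\<Sum>x\<leftarrow>xs. f x) \<le> (\<Sum>x\<leftarrow>xs. (g x::nat))"
  by (induction xs) (auto intro: add_mono)

lemma sum_list_partition:
  assumes "finite Pi" "\<forall>A\<in>set P. \<exists>!D. D \<in> Pi \<and> A \<subseteq> D"
  shows "(\<Sum>A\<leftarrow>P. (g A :: nat)) = (\<Sum>D\<in>Pi. \<Sum>A\<leftarrow>filter (\<lambda>A. A \<subseteq> D) P. g A)"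
using assms(2) proof (induction P)
  case Nil then show ?case by simp
next
  case (Cons A P)
  then obtain D0 where D0: "D0 \<in> Pi" "A \<subseteq> D0" "\<And>D. D \<in> Pi \<Longrightarrow> A \<subseteq> D \<Longrightarrow> D = D0" by (metis list.set_intros(1))
  have "(\<Sum>D\<in>Pi. \<Sum>A'\<leftarrow>filter (\<lambda>A'. A' \<subseteq> D) (A#P). g A')
      = (\<Sum>D\<in>Pi. (if D = D0 then g A else 0) + (\<Sum>A'\<leftarrow>filter (\<lambda>A'. A' \<subseteq> D) P. g A'))"
  proof (rule sum.cong[OF refl])
    fix D assume "D \<in> Pi"
    then have "A \<subseteq> D \<longleftrightarrow> D = D0" using D0 by blast
    then show "(\<Sum>A'\<leftarrow>filter (\<lambda>A'. A' \<subseteq> D) (A#P). g A') = (if D = D0 then g A else 0) + (\<Sum>A'\<leftarrow>filter (\<lambda>A'. A' \<subseteq> D) P. g A')"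
      by simp
  qed
  also have "\<dots> = (\<Sum>D\<in>Pi. if D = D0 then g A else 0) + (\<Sum>D\<in>Pi. \<Sum>A'\<leftarrow>filter (\<lambda>A'. A' \<subseteq> D) P. g A')"
    by (rule sum.distrib)
  also have "(\<Sum>D\<in>Pi. if D = D0 then g A else 0) = g A" using D0(1) assms(1) by simp
  finally show ?case using Cons by simp
qed


lemma pc_generic:
  assumes gh: "good_h h"
  and fdef: "\<And>C P. finite C \<Longrightarrow> is_profile C P \<Longrightarrow> f C P = scoring_rule (gcost h) C P"
  shows "partition_consistent f"
unfolding partition_consistent_def
proof (intro allI impI)
  fix C :: "'a set" and P r assume C: "finite C" and prof: "is_profile C P" and ax: "is_axis C r"
  define Rl where "Rl = trancl (coapp_rel C P)"
  define Pi where "Pi = coapp_partition C P"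
  have crC: "coapp_rel C P \<subseteq> C \<times> C" unfolding coapp_rel_def by auto
  have eqv: "equiv C Rl"
  proof (rule equivI)
    show "Rl \<subseteq> C \<times> C" unfolding Rl_def using crC by (rule trancl_subset_Sigma)
    show "refl_on C Rl" unfolding refl_on_def Rl_def coapp_rel_def by auto
    show "sym Rl" unfolding Rl_def by (rule sym_trancl) (auto simp: sym_def coapp_rel_def)
    show "trans Rl" unfolding Rl_def by simp
  qed
  have Pi_eq: "Pi = C // Rl" unfolding Pi_def Rl_def coapp_partition_def by simp
  have finPi: "finite Pi" unfolding Pi_eq using C eqv by (simp add: finite_quotient equiv_def)
  have DsubC: "\<And>D. D \<in> Pi \<Longrightarrow> D \<subseteq> C" unfolding Pi_eq using eqv in_quotient_imp_subset by blast
  have finD: "\<And>D. D \<in> Pi \<Longrightarrow> finite D" using DsubC C finite_subset by blast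
  have ballot_sub: "\<And>A a. A \<in> set P \<Longrightarrow> a \<in> A \<Longrightarrow> A \<subseteq> Rl``{a}"
  proof
    fix A a x assume A: "A \<in> set P" and a: "a \<in> A" and x: "x \<in> A"
    have "A \<subseteq> C" using prof A unfolding is_profile_def by blast
    then have "(a,x) \<in> coapp_rel C P" unfolding coapp_rel_def using A a x by blast
    then show "x \<in> Rl``{a}" unfolding Rl_def by (simp add: r_into_trancl')
  qed
  have cls: "\<And>a. a \<in> C \<Longrightarrow> Rl``{a} \<in> Pi" unfolding Pi_eq by (rule quotientI)
  have closed: "\<And>D x y. D \<in> Pi \<Longrightarrow> x \<in> D \<Longrightarrow> (x,y) \<in> Rl \<Longrightarrow> y \<in> D"
    unfolding Pi_eq using eqv in_quotient_imp_closed by metis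
  have disj: "\<And>D1 D2. D1 \<in> Pi \<Longrightarrow> D2 \<in> Pi \<Longrightarrow> D1 = D2 \<or> D1 \<inter> D2 = {}"
    unfolding Pi_eq using eqv quotient_disj by metis
  have ballot_dis: "\<And>A D. A \<in> set P \<Longrightarrow> D \<in> Pi \<Longrightarrow> A \<subseteq> D \<or> A \<inter> D = {}"
  proof -
    fix A D assume A: "A \<in> set P" and D: "D \<in> Pi"
    show "A \<subseteq> D \<or> A \<inter> D = {}"
    proof (cases "A \<inter> D = {}")
      case False
      then obtain a where a: "a \<in> A" "a \<in> D" by blast
      have "A \<subseteq> Rl``{a}" using ballot_sub A a by blast
      also have "Rl``{a} \<subseteq> D" using closed D a by blast
      finally show ?thesis by blast
    qed simp
  qed
  have ballot_in: "\<forall>A\<in>set P. \<exists>!D. D \<in> Pi \<and> A \<subseteq> D"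
  proof
    fix A assume A: "A \<in> set P"
    then obtain a where a: "a \<in> A" using prof unfolding is_profile_def by blast
    have aC: "a \<in> C" using A a prof unfolding is_profile_def by blast
    show "\<exists>!D. D \<in> Pi \<and> A \<subseteq> D"
    proof (rule ex1I[of _ "Rl``{a}"])
      show "Rl``{a} \<in> Pi \<and> A \<subseteq> Rl``{a}" using cls aC ballot_sub A a by blast
      fix D assume "D \<in> Pi \<and> A \<subseteq> D"
      moreover have "a \<in> Rl``{a}" using ballot_sub A a by blast
      ultimately show "D = Rl``{a}" using disj[of D "Rl``{a}"] cls[OF aC] a by blast
    qed
  qed
  define PD where "PD D = filter (\<lambda>A. A \<subseteq> D) P" for D
  have rp: "\<And>D. D \<in> Pi \<Longrightarrow> restrict_profile D P = PD D"
    unfolding PD_def using ballot_dis prof unfolding is_profile_def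
    by (intro restrict_profile_filter) blast
  have profD: "\<And>D. D\<in>Pi \<Longrightarrow> is_profile D (PD D)"
    unfolding PD_def is_profile_def using prof unfolding is_profile_def by auto
  have fD: "\<And>D. D \<in> Pi \<Longrightarrow> f D (restrict_profile D P) = scoring_rule (gcost h) D (PD D)"
    using rp fdef finD profD by simp
  have fC: "f C P = scoring_rule (gcost h) C P" using fdef C prof by simp
  define cst where "cst D Q s = (\<Sum>A\<leftarrow>Q. gcost h D A s)" for D :: "'a set" and Q s
  define E where "E s = (\<Sum>D\<in>Pi. \<Sum>A\<leftarrow>PD D. extc h C D A s)" for s
  have decomp: "\<And>s. cst C P s = (\<Sum>D\<in>Pi. cst D (PD D) (restrict_axis s D)) + E s"
  proof -
    fix s
    have "cst C P s = (\<Sum>D\<in>Pi. \<Sum>A\<leftarrow>PD D. gcost h C A s)"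
      unfolding cst_def PD_def by (rule sum_list_partition[OF finPi ballot_in])
    also have "\<dots> = (\<Sum>D\<in>Pi. \<Sum>A\<leftarrow>PD D. gcost h D A (restrict_axis s D) + extc h C D A s)"
    proof (rule sum.cong[OF refl], rule sum_list_cong')
      fix D A assume "D \<in> Pi" "A \<in> set (PD D)"
      then show "gcost h C A s = gcost h D A (restrict_axis s D) + extc h C D A s"
        using gcost_split[OF C DsubC] unfolding PD_def by auto
    qed
    also have "\<dots> = (\<Sum>D\<in>Pi. cst D (PD D) (restrict_axis s D) + (\<Sum>A\<leftarrow>PD D. extc h C D A s))"
      unfolding cst_def by (simp add: sum_list_addf)
    also have "\<dots> = (\<Sum>D\<in>Pi. cst D (PD D) (restrict_axis s D)) + E s"
      unfolding E_def by (rule sum.distrib)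
    finally show "cst C P s = (\<Sum>D\<in>Pi. cst D (PD D) (restrict_axis s D)) + E s" .
  qed
  have E0: "\<And>s. (\<forall>D\<in>Pi. is_interval s D) \<Longrightarrow> E s = 0"
  proof -
    fix s assume H: "\<forall>D\<in>Pi. is_interval s D"
    show "E s = 0" unfolding E_def
    proof (rule sum.neutral, rule ballI)
      fix D assume D: "D \<in> Pi"
      have "(\<Sum>A\<leftarrow>PD D. extc h C D A s) = (\<Sum>A\<leftarrow>PD D. 0)"
        by (rule sum_list_cong') (use ext_zero[OF gh _ bspec[OF H D]] in \<open>auto simp: PD_def\<close>)
      then show "(\<Sum>A\<leftarrow>PD D. extc h C D A s) = 0" by simp
    qed
  qed
  have Epos: "\<And>s. is_axis C s \<Longrightarrow> \<exists>D\<in>Pi. \<not> is_interval s D \<Longrightarrow> E s > 0"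
  proof -
    fix s assume s: "is_axis C s" and "\<exists>D\<in>Pi. \<not> is_interval s D"
    then obtain D a b x where D: "D \<in> Pi" and ab: "a \<in> D" "b \<in> D" "(a,x) \<in> s" "(x,b) \<in> s" "x \<notin> D"
      unfolding is_interval_def by blast
    have "(a,b) \<in> Rl" using D ab eqv in_quotient_imp_in_rel unfolding Pi_eq by fastforce
    moreover have "(a,x) \<notin> Rl" using closed D ab by blast
    ultimately obtain A a' b' where A: "A \<in> set P" "a' \<in> A" "b' \<in> A" "(a',x) \<in> s" "(x,b') \<in> s"
      "(a,a') \<in> (coapp_rel C P)\<^sup>*"
      using conn[OF _ s, where u=a and v=b and P=P and x=x] ab unfolding Rl_def by blast
    have "a' \<in> D" using A(6) ab(1) closed[OF D] unfolding Rl_def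
      by (metis rtrancl_eq_or_trancl)
    then have AD: "A \<subseteq> D" using ballot_dis[OF A(1) D] A(2) by blast
    have xC: "x \<in> C" using s ab unfolding is_axis_def by blast
    have finA: "finite A" using AD finD D finite_subset by blast
    have pos: "extc h C D A s > 0"
      by (rule ext_pos[OF gh C finA _ A(2,3,4,5)]) (use xC ab in blast)
    have "A \<in> set (PD D)" using A AD unfolding PD_def by simp
    then have "extc h C D A s \<le> (\<Sum>A\<leftarrow>PD D. extc h C D A s)"
      by (simp add: member_le_sum_list)
    also have "\<dots> \<le> E s" unfolding E_def
      by (rule member_le_sum[OF D]) (use finPi in auto)
    finally show "E s > 0" using pos by linarith
  qed
  have rax: "\<And>s D. is_axis C s \<Longrightarrow> D \<in> Pi \<Longrightarrow> is_axis D (restrict_axis s D)"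
    using axis_restrict DsubC by blast
  show "r \<in> f C P \<longleftrightarrow> (\<forall>D \<in> coapp_partition C P. is_interval r D \<and>
              restrict_axis r D \<in> f D (restrict_profile D P))"
    unfolding Pi_def[symmetric]
  proof
    assume H: "\<forall>D\<in>Pi. is_interval r D \<and> restrict_axis r D \<in> f D (restrict_profile D P)"
    show "r \<in> f C P" unfolding fC scoring_rule_def
    proof (intro CollectI conjI allI impI ax)
      fix r' assume r': "is_axis C r'"
      have "(\<Sum>A\<leftarrow>P. gcost h C A r) = (\<Sum>D\<in>Pi. cst D (PD D) (restrict_axis r D))"
        using decomp[of r] E0[of r] H unfolding cst_def by simp
      also have "\<dots> \<le> (\<Sum>D\<in>Pi. cst D (PD D) (restrict_axis r' D))"
      proof (rule sum_mono)
        fix D assume D: "D \<in> Pi"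
        then have "restrict_axis r D \<in> scoring_rule (gcost h) D (PD D)" using H fD by auto
        then show "cst D (PD D) (restrict_axis r D) \<le> cst D (PD D) (restrict_axis r' D)"
          unfolding scoring_rule_def cst_def using rax[OF r' D] by blast
      qed
      also have "\<dots> \<le> (\<Sum>A\<leftarrow>P. gcost h C A r')" using decomp[of r'] unfolding cst_def by simp
      finally show "(\<Sum>A\<leftarrow>P. gcost h C A r) \<le> (\<Sum>A\<leftarrow>P. gcost h C A r')" .
    qed
  next
    assume rf: "r \<in> f C P"
    have ropt: "\<And>r'. is_axis C r' \<Longrightarrow> cst C P r \<le> cst C P r'"
      using rf unfolding fC scoring_rule_def cst_def by blast
    define s where "s D = (SOME s. is_axis D s \<and> (\<forall>s'. is_axis D s' \<longrightarrow> cst D (PD D) s \<le> cst D (PD D) s'))" for D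
    have sD: "is_axis D (s D) \<and> (\<forall>s'. is_axis D s' \<longrightarrow> cst D (PD D) (s D) \<le> cst D (PD D) s')" if D: "D \<in> Pi" for D
    proof -
      have "\<exists>s. is_axis D s \<and> (\<forall>s'. is_axis D s' \<longrightarrow> cst D (PD D) s \<le> cst D (PD D) s')"
        using ex_has_least_nat[where P="is_axis D" and k="restrict_axis r D" and m="cst D (PD D)"] rax[OF ax D] by blast
      then show ?thesis unfolding s_def by (rule someI_ex)
    qed
    obtain g :: "'a \<Rightarrow> nat" where g: "inj_on g C" using finite_imp_inj_to_nat_seg[OF C] by blast
    define key where "key D = Min (g ` D)" for D
    define cl where "cl x = Rl``{x}" for x
    have clPi: "\<And>x. x \<in> C \<Longrightarrow> cl x \<in> Pi" unfolding cl_def using cls by blast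
    have inCl: "\<And>x. x \<in> C \<Longrightarrow> x \<in> cl x" unfolding cl_def using eqv equiv_class_self by metis
    have clD: "\<And>x D. D \<in> Pi \<Longrightarrow> x \<in> D \<Longrightarrow> cl x = D"
    proof -
      fix x D assume D: "D \<in> Pi" and x: "x \<in> D"
      then have xC: "x \<in> C" using DsubC by blast
      then show "cl x = D" using disj[OF clPi[OF xC] D] inCl[OF xC] x by blast
    qed
    have keyinj: "\<And>D1 D2. D1 \<in> Pi \<Longrightarrow> D2 \<in> Pi \<Longrightarrow> key D1 = key D2 \<Longrightarrow> D1 = D2"
    proof -
      fix D1 D2 assume D: "D1 \<in> Pi" "D2 \<in> Pi" "key D1 = key D2"
      have ne: "D1 \<noteq> {}" "D2 \<noteq> {}" using D eqv in_quotient_imp_non_empty unfolding Pi_eq by blast+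
      have "key D1 \<in> g ` D1" "key D2 \<in> g ` D2" unfolding key_def
        using ne finD D by (auto intro!: Min_in)
      then obtain x1 x2 where "x1 \<in> D1" "x2 \<in> D2" "g x1 = g x2" using D(3) by auto
      then have "x1 = x2" using g DsubC D inj_onD by (metis subsetD)
      then show "D1 = D2" using disj[OF D(1,2)] \<open>x1 \<in> D1\<close> \<open>x2 \<in> D2\<close> by blast
    qed
    define rs where "rs = {(x,y). x \<in> C \<and> y \<in> C \<and> (key (cl x) < key (cl y) \<or> (cl x = cl y \<and> (x,y) \<in> s (cl x)))}"
    have sax: "\<And>x. x \<in> C \<Longrightarrow> is_axis (cl x) (s (cl x))" using sD clPi by blast
    have rs_ax: "is_axis C rs"
      unfolding is_axis_def strict_linear_order_on_def
    proof (intro conjI)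
      show "rs \<subseteq> C \<times> C" unfolding rs_def by auto
      show "irrefl rs" unfolding rs_def irrefl_on_def using sax
        unfolding is_axis_def strict_linear_order_on_def irrefl_on_def by auto
      show "trans rs" unfolding trans_def
      proof (intro allI impI)
        fix x y z assume "(x,y) \<in> rs" "(y,z) \<in> rs"
        then have xyz: "x \<in> C" "y \<in> C" "z \<in> C"
          and h1: "key (cl x) < key (cl y) \<or> (cl x = cl y \<and> (x,y) \<in> s (cl x))"
          and h2: "key (cl y) < key (cl z) \<or> (cl y = cl z \<and> (y,z) \<in> s (cl y))"
          unfolding rs_def by auto
        have tr: "trans (s (cl x))" using sax[OF xyz(1)] unfolding is_axis_def strict_linear_order_on_def by blast
        show "(x,z) \<in> rs" unfolding rs_def using xyz h1 h2 tr unfolding trans_def by auto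
      qed
      show "total_on C rs" unfolding total_on_def
      proof (intro ballI impI)
        fix x y assume xy: "x \<in> C" "y \<in> C" "x \<noteq> y"
        show "(x,y) \<in> rs \<or> (y,x) \<in> rs"
        proof (cases "cl x = cl y")
          case True
          have "total_on (cl x) (s (cl x))" using sax[OF xy(1)] unfolding is_axis_def strict_linear_order_on_def by blast
          then have "(x,y) \<in> s (cl x) \<or> (y,x) \<in> s (cl x)" using inCl xy True unfolding total_on_def by metis
          then show ?thesis unfolding rs_def using xy True by auto
        next
          case False
          then have "key (cl x) \<noteq> key (cl y)" using keyinj clPi xy by blast
          then show ?thesis unfolding rs_def using xy by auto
        qed
      qed
    qed
    have rs_res: "\<And>D. D \<in> Pi \<Longrightarrow> restrict_axis rs D = s D"
    proof -
      fix D assume D: "D \<in> Pi"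
      have sub: "s D \<subseteq> D \<times> D" using sD[OF D] unfolding is_axis_def by blast
      show "restrict_axis rs D = s D"
        unfolding restrict_axis_def rs_def using clD[OF D] DsubC[OF D] sub by auto
    qed
    have rs_int: "\<And>D. D \<in> Pi \<Longrightarrow> is_interval rs D"
      unfolding is_interval_def
    proof (intro ballI allI impI)
      fix D a b c assume D: "D \<in> Pi" and ab: "a \<in> D" "b \<in> D" and c: "(a,c) \<in> rs \<and> (c,b) \<in> rs"
      have cC: "c \<in> C" using c unfolding rs_def by auto
      have "key (cl a) \<le> key (cl c)" "key (cl c) \<le> key (cl b)" using c unfolding rs_def by auto
      then have "key (cl c) = key D" using clD[OF D] ab by auto
      then have "cl c = D" using keyinj clPi[OF cC] D by blast
      then show "c \<in> D" using inCl[OF cC] by blast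
    qed
    have sum_eq: "(\<Sum>D\<in>Pi. cst D (PD D) (restrict_axis r D)) + E r = (\<Sum>D\<in>Pi. cst D (PD D) (s D))"
    proof -
      have "cst C P rs = (\<Sum>D\<in>Pi. cst D (PD D) (s D))"
        using decomp[of rs] E0[of rs] rs_int rs_res by simp
      moreover have "cst C P r \<le> cst C P rs" using ropt rs_ax by blast
      moreover have le: "(\<Sum>D\<in>Pi. cst D (PD D) (s D)) \<le> (\<Sum>D\<in>Pi. cst D (PD D) (restrict_axis r D))"
        by (rule sum_mono) (use sD rax[OF ax] in blast)
      ultimately show ?thesis using decomp[of r] by linarith
    qed
    have E_r: "E r = 0" and eqD: "\<forall>D\<in>Pi. cst D (PD D) (restrict_axis r D) = cst D (PD D) (s D)"
    proof -
      have le: "\<forall>D\<in>Pi. cst D (PD D) (s D) \<le> cst D (PD D) (restrict_axis r D)"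
        using sD rax[OF ax] by blast
      show "\<forall>D\<in>Pi. cst D (PD D) (restrict_axis r D) = cst D (PD D) (s D)"
      proof (rule ccontr)
        assume "\<not> ?thesis"
        then obtain D0 where D0: "D0 \<in> Pi" "cst D0 (PD D0) (restrict_axis r D0) \<noteq> cst D0 (PD D0) (s D0)" by blast
        then have lt: "cst D0 (PD D0) (s D0) < cst D0 (PD D0) (restrict_axis r D0)" using bspec[OF le D0(1)] by linarith
        have "(\<Sum>D\<in>Pi. cst D (PD D) (s D)) < (\<Sum>D\<in>Pi. cst D (PD D) (restrict_axis r D))"
          by (rule sum_strict_mono_ex1[OF finPi le], rule bexI[where x=D0], rule lt, rule D0(1))
        then show False using sum_eq by linarith
      qed
      then have EQ: "\<And>D. D \<in> Pi \<Longrightarrow> cst D (PD D) (restrict_axis r D) = cst D (PD D) (s D)" by blast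
      have "(\<Sum>D\<in>Pi. cst D (PD D) (restrict_axis r D)) = (\<Sum>D\<in>Pi. cst D (PD D) (s D))"
        by (rule sum.cong[OF refl], rule EQ)
      then show "E r = 0" using sum_eq by linarith
    qed
    show "\<forall>D\<in>Pi. is_interval r D \<and> restrict_axis r D \<in> f D (restrict_profile D P)"
    proof (intro ballI conjI)
      fix D assume D: "D \<in> Pi"
      show "is_interval r D" using Epos[OF ax] E_r D by fastforce
      show "restrict_axis r D \<in> f D (restrict_profile D P)"
        unfolding fD[OF D] scoring_rule_def
        using rax[OF ax D] eqD D sD[OF D] unfolding cst_def by fastforce
    qed
  qed
qed

definition hbc :: "nat \<Rightarrow> nat \<Rightarrow> nat" where "hbc l m = (if 0 < l \<and> 0 < m then 1 else 0)"

lemma good_hbc: "good_h hbc" unfolding good_h_def hbc_def by simp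

lemma good_min: "good_h min" unfolding good_h_def by (auto simp: min_def)

lemma good_mult: "good_h (\<lambda>l m. l * m)" unfolding good_h_def by simp

lemma cost_BC_eq:
  assumes "finite A" "finite C"
  shows "cost_BC C A r = gcost hbc C A r"
proof -
  have seteq: "{b \<in> C - A. \<exists>a\<in>A. \<exists>c\<in>A. (a,b) \<in> r \<and> (b,c) \<in> r}
      = {x \<in> C - A. 0 < card {y\<in>A. (y,x) \<in> r} \<and> 0 < card {y\<in>A. (x,y) \<in> r}}"
    using assms(1) by (auto simp: card_gt_0_iff)
  have "cost_BC C A r = card {x \<in> C - A. 0 < card {y\<in>A. (y,x) \<in> r} \<and> 0 < card {y\<in>A. (x,y) \<in> r}}"
    unfolding cost_BC_def seteq ..
  also have "\<dots> = (\<Sum>x\<in>{x \<in> C - A. 0 < card {y\<in>A. (y,x) \<in> r} \<and> 0 < card {y\<in>A. (x,y) \<in> r}}. 1)"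
    by simp
  also have "\<dots> = (\<Sum>x\<in>C - A. if 0 < card {y\<in>A. (y,x) \<in> r} \<and> 0 < card {y\<in>A. (x,y) \<in> r} then 1 else 0)"
    by (rule sum.inter_filter) (use assms(2) in simp)
  also have "\<dots> = gcost hbc C A r" unfolding gcost_def hbc_def ..
  finally show ?thesis .
qed

lemma BC_eq: "finite C \<Longrightarrow> is_profile C P \<Longrightarrow> BC C P = scoring_rule (gcost hbc) C P"
proof -
  assume C: "finite C" and P: "is_profile C P"
  have "\<And>r. (\<Sum>A\<leftarrow>P. cost_BC C A r) = (\<Sum>A\<leftarrow>P. gcost hbc C A r)"
  proof (rule sum_list_cong')
    fix r :: "'a rel" and A assume "A \<in> set P"
    then have "finite A" using P C finite_subset unfolding is_profile_def by metis
    then show "cost_BC C A r = gcost hbc C A r" using C by (rule cost_BC_eq)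
  qed
  then show ?thesis unfolding BC_def scoring_rule_def by simp
qed

lemma MS_eq: "(MS :: 'a rule) = scoring_rule (gcost min)"
proof -
  have "(cost_MS :: 'a costfun) = gcost min" by (intro ext) (simp add: cost_MS_def gcost_def)
  then show ?thesis unfolding MS_def by simp
qed

lemma FT_eq: "(FT :: 'a rule) = scoring_rule (gcost (\<lambda>l m. l * m))"
proof -
  have "(cost_FT :: 'a costfun) = gcost (\<lambda>l m. l * m)" by (intro ext) (simp add: cost_FT_def gcost_def)
  then show ?thesis unfolding FT_def by simp
qed

lemma pc_BC: "partition_consistent BC" by (rule pc_generic[OF good_hbc BC_eq])
lemma pc_MS: "partition_consistent MS" by (rule pc_generic[OF good_min]) (simp add: MS_eq)
lemma pc_FT: "partition_consistent FT" by (rule pc_generic[OF good_mult]) (simp add: FT_eq)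

lemma rank_axis:
  fixes rk :: "'a \<Rightarrow> nat"
  assumes "inj_on rk C"
  shows "is_axis C {(x,y). x \<in> C \<and> y \<in> C \<and> rk x < rk y}"
  unfolding is_axis_def strict_linear_order_on_def
proof (intro conjI)
  show "trans {(x,y). x \<in> C \<and> y \<in> C \<and> rk x < rk y}" unfolding trans_def by auto
  show "irrefl {(x,y). x \<in> C \<and> y \<in> C \<and> rk x < rk y}" unfolding irrefl_on_def by auto
  show "total_on C {(x,y). x \<in> C \<and> y \<in> C \<and> rk x < rk y}" unfolding total_on_def
  proof (intro ballI impI)
    fix x y assume "x \<in> C" "y \<in> C" "x \<noteq> y"
    then have "rk x \<noteq> rk y" using assms inj_onD by metis
    then show "(x, y) \<in> {(x,y). x \<in> C \<and> y \<in> C \<and> rk x < rk y} \<or> (y, x) \<in> {(x,y). x \<in> C \<and> y \<in> C \<and> rk x < rk y}"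
      using \<open>x \<in> C\<close> \<open>y \<in> C\<close> by auto
  qed
qed auto

lemma interval_pair_break:
  assumes "is_interval r {a,q}" "(a,p) \<in> r" "(p,q) \<in> r" "p \<noteq> a" "p \<noteq> q"
  shows False
proof -
  have "\<forall>x\<in>{a,q}. \<forall>y\<in>{a,q}. \<forall>c. (x,c) \<in> r \<and> (c,y) \<in> r \<longrightarrow> c \<in> {a,q}"
    using assms(1) unfolding is_interval_def .
  then have "(a,p) \<in> r \<and> (p,q) \<in> r \<longrightarrow> p \<in> {a,q}" by simp
  then show False using assms(2-5) by simp
qed

lemma interval_pair_break2:
  assumes "is_interval r {a,p}" "(p,q) \<in> r" "(q,a) \<in> r" "q \<noteq> a" "p \<noteq> q"
  shows False
proof -
  have "\<forall>x\<in>{a,p}. \<forall>y\<in>{a,p}. \<forall>c. (x,c) \<in> r \<and> (c,y) \<in> r \<longrightarrow> c \<in> {a,p}"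
    using assms(1) unfolding is_interval_def .
  then have "(p,q) \<in> r \<and> (q,a) \<in> r \<longrightarrow> q \<in> {a,p}" by simp
  then show False using assms(2-5) by simp
qed

lemma same_side:
  assumes ax: "is_axis C r" and pq: "p \<in> C" "q \<in> C" "p \<noteq> q" "p \<noteq> a" "q \<noteq> a"
  and side: "((a,p) \<in> r \<and> (a,q) \<in> r) \<or> ((p,a) \<in> r \<and> (q,a) \<in> r)"
  and ip: "is_interval r {a,p}" and iq: "is_interval r {a,q}"
  shows False
proof -
  have tot: "total_on C r" using axis_props[OF ax] by simp
  have "(p,q) \<in> r \<or> (q,p) \<in> r" using tot pq unfolding total_on_def by metis
  moreover have ip': "is_interval r {p,a}" "is_interval r {q,a}" using ip iq by (simp_all add: insert_commute)
  ultimately show False using side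
  proof (elim disjE conjE)
    assume "(p,q) \<in> r" "(a,p) \<in> r" "(a,q) \<in> r"
    then show False using interval_pair_break[OF iq] pq by metis
  next
    assume "(q,p) \<in> r" "(a,p) \<in> r" "(a,q) \<in> r"
    then show False using interval_pair_break[OF ip] pq by metis
  next
    assume "(p,q) \<in> r" "(p,a) \<in> r" "(q,a) \<in> r"
    then show False using interval_pair_break2[OF ip] pq by metis
  next
    assume "(q,p) \<in> r" "(p,a) \<in> r" "(q,a) \<in> r"
    then show False using interval_pair_break2[OF iq] pq by metis
  qed
qed

lemma three_star:
  assumes ax: "is_axis C r" and mem: "a \<in> C" "b \<in> C" "c \<in> C" "d \<in> C"
  and dist: "a \<noteq> b" "a \<noteq> c" "a \<noteq> d" "b \<noteq> c" "b \<noteq> d" "c \<noteq> d"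
  and i1: "is_interval r {a,b}" and i2: "is_interval r {a,c}" and i3: "is_interval r {a,d}"
  shows False
proof -
  have tot: "total_on C r" using axis_props[OF ax] by simp
  have sb: "(a,b) \<in> r \<or> (b,a) \<in> r" using tot mem dist unfolding total_on_def by metis
  have sc: "(a,c) \<in> r \<or> (c,a) \<in> r" using tot mem dist unfolding total_on_def by metis
  have sd: "(a,d) \<in> r \<or> (d,a) \<in> r" using tot mem dist unfolding total_on_def by metis
  have bc: "\<not> (((a,b) \<in> r \<and> (a,c) \<in> r) \<or> ((b,a) \<in> r \<and> (c,a) \<in> r))"
    using same_side[OF ax mem(2,3) dist(4) dist(1)[symmetric] dist(2)[symmetric] _ i1 i2] by blast
  have bd: "\<not> (((a,b) \<in> r \<and> (a,d) \<in> r) \<or> ((b,a) \<in> r \<and> (d,a) \<in> r))"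
    using same_side[OF ax mem(2,4) dist(5) dist(1)[symmetric] dist(3)[symmetric] _ i1 i3] by blast
  have cd: "\<not> (((a,c) \<in> r \<and> (a,d) \<in> r) \<or> ((c,a) \<in> r \<and> (d,a) \<in> r))"
    using same_side[OF ax mem(3,4) dist(6) dist(2)[symmetric] dist(3)[symmetric] _ i2 i3] by blast
  show False using sb sc sd bc bd cd by blast
qed

lemma mf_dom_fin: "finite A \<Longrightarrow> finite {(x,y). x \<in> A \<and> y \<in> A \<and> (x = y \<or> (x,y) \<in> r)}"
  by (rule finite_subset[of _ "A \<times> A"]) auto

lemma mf_ge1:
  assumes ax: "is_axis C r" and C: "finite C" and AC: "A \<subseteq> C" and ne: "A \<noteq> {}"
  and ni: "\<not> is_interval r A"
  shows "1 \<le> cost_MF C A r"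
proof -
  define dom where "dom = {(x,y). x \<in> A \<and> y \<in> A \<and> (x = y \<or> (x,y) \<in> r)}"
  define val where "val = (\<lambda>(x,y). card {z \<in> A. (z,x) \<in> r \<or> (y,z) \<in> r}
                                 + card {z \<in> C - A. (x,z) \<in> r \<and> (z,y) \<in> r})"
  have finA: "finite A" using C AC finite_subset by metis
  have fin: "finite (val ` dom)" unfolding dom_def using mf_dom_fin[OF finA] by simp
  obtain a0 where "a0 \<in> A" using ne by blast
  then have "(a0,a0) \<in> dom" unfolding dom_def by simp
  then have ne2: "val ` dom \<noteq> {}" by blast
  have props: "trans r" "irrefl r" "total_on C r" "r \<subseteq> C \<times> C" using axis_props[OF ax] by auto
  have all: "\<forall>v\<in>val ` dom. 1 \<le> v"
  proof
    fix v assume "v \<in> val ` dom"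
    then obtain x y where xy: "(x,y) \<in> dom" "v = val (x,y)" by auto
    show "1 \<le> v"
    proof (rule ccontr)
      assume "\<not> 1 \<le> v"
      then have "val (x,y) = 0" using xy by simp
      then have e1: "card {z \<in> A. (z,x) \<in> r \<or> (y,z) \<in> r} = 0" and e2: "card {z \<in> C - A. (x,z) \<in> r \<and> (z,y) \<in> r} = 0"
        unfolding val_def by simp_all
      have f1: "finite {z \<in> A. (z,x) \<in> r \<or> (y,z) \<in> r}" using finA by simp
      have f2: "finite {z \<in> C - A. (x,z) \<in> r \<and> (z,y) \<in> r}" using C by simp
      have E1: "\<And>z. z \<in> A \<Longrightarrow> (z,x) \<notin> r \<and> (y,z) \<notin> r"
      proof -
        fix z assume "z \<in> A"
        have "{z \<in> A. (z,x) \<in> r \<or> (y,z) \<in> r} = {}" using e1 f1 by simp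
        then show "(z,x) \<notin> r \<and> (y,z) \<notin> r" using \<open>z \<in> A\<close> by blast
      qed
      have E2: "{z \<in> C - A. (x,z) \<in> r \<and> (z,y) \<in> r} = {}" using e2 f2 by simp
      have xA: "x \<in> A" "y \<in> A" using xy unfolding dom_def by auto
      have lo: "\<And>p. p \<in> A \<Longrightarrow> p = x \<or> (x,p) \<in> r"
      proof -
        fix p assume p: "p \<in> A"
        have "p = x \<or> (x,p) \<in> r \<or> (p,x) \<in> r" using props(3) p xA AC unfolding total_on_def by blast
        then show "p = x \<or> (x,p) \<in> r" using E1[OF p] by blast
      qed
      have hi: "\<And>p. p \<in> A \<Longrightarrow> p = y \<or> (p,y) \<in> r"
      proof -
        fix p assume p: "p \<in> A"
        have "p = y \<or> (y,p) \<in> r \<or> (p,y) \<in> r" using props(3) p xA AC unfolding total_on_def by blast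
        then show "p = y \<or> (p,y) \<in> r" using E1[OF p] by blast
      qed
      have "is_interval r A" unfolding is_interval_def
      proof (intro ballI allI impI)
        fix p q c assume p: "p \<in> A" and q: "q \<in> A" and c: "(p,c) \<in> r \<and> (c,q) \<in> r"
        show "c \<in> A"
        proof (rule ccontr)
          assume cA: "c \<notin> A"
          have xc: "(x,c) \<in> r"
          proof (cases "p = x")
            case True then show ?thesis using c by simp
          next
            case False
            then have xp: "(x,p) \<in> r" using lo[OF p] by simp
            from c have pc: "(p,c) \<in> r" by simp
            show ?thesis by (rule transD[OF props(1) xp pc])
          qed
          have cy: "(c,y) \<in> r"
          proof (cases "q = y")
            case True then show ?thesis using c by simp
          next
            case False
            then have qy: "(q,y) \<in> r" using hi[OF q] by simp
            from c have cq: "(c,q) \<in> r" by simp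
            show ?thesis by (rule transD[OF props(1) cq qy])
          qed
          have "c \<in> C" using props(4) c by blast
          then have "c \<in> {z \<in> C - A. (x,z) \<in> r \<and> (z,y) \<in> r}" using cA xc cy by simp
          then show False unfolding E2 by simp
        qed
      qed
      then show False using ni by simp
    qed
  qed
  have "1 \<le> Min (val ` dom)" using all fin ne2 by simp
  then show ?thesis unfolding cost_MF_def dom_def val_def .
qed

lemma mf_le:
  assumes C: "finite C" and AC: "A \<subseteq> C" and xy: "x \<in> A" "y \<in> A" "x = y \<or> (x,y) \<in> r"
  shows "cost_MF C A r \<le> card {z \<in> A. (z,x) \<in> r \<or> (y,z) \<in> r} + card {z \<in> C - A. (x,z) \<in> r \<and> (z,y) \<in> r}"
proof -
  have finA: "finite A" using C AC finite_subset by metis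
  define dom where "dom = {(x,y). x \<in> A \<and> y \<in> A \<and> (x = y \<or> (x,y) \<in> r)}"
  define val where "val = (\<lambda>(x,y). card {z \<in> A. (z,x) \<in> r \<or> (y,z) \<in> r}
                                 + card {z \<in> C - A. (x,z) \<in> r \<and> (z,y) \<in> r})"
  have fin: "finite (val ` dom)" unfolding dom_def using mf_dom_fin[OF finA] by simp
  have "(x,y) \<in> dom" unfolding dom_def using xy by simp
  then have "val (x,y) \<in> val ` dom" by (rule imageI)
  then have "Min (val ` dom) \<le> val (x,y)" using fin by (rule Min_le[rotated])
  then show ?thesis unfolding cost_MF_def dom_def val_def by simp
qed

lemma mf_pair0:
  assumes ax: "is_axis C r" and C: "finite C" and xy: "x \<in> C" "y \<in> C" "(x,y) \<in> r"
  and iv: "is_interval r {x,y}"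
  shows "cost_MF C {x,y} r = 0"
proof -
  have le: "cost_MF C {x,y} r \<le> card {z \<in> {x,y}. (z,x) \<in> r \<or> (y,z) \<in> r} + card {z \<in> C - {x,y}. (x,z) \<in> r \<and> (z,y) \<in> r}"
    by (rule mf_le) (use C xy in auto)
  have s1: "{z \<in> {x,y}. (z,x) \<in> r \<or> (y,z) \<in> r} = {}"
  proof -
    have "(x,x) \<notin> r" "(y,y) \<notin> r" using axis_props[OF ax] unfolding irrefl_on_def by auto
    moreover have "(y,x) \<notin> r" using axis_asym[OF ax xy(3)] by metis
    ultimately show ?thesis by auto
  qed
  have s2: "{z \<in> C - {x,y}. (x,z) \<in> r \<and> (z,y) \<in> r} = {}"
  proof -
    have "\<forall>a\<in>{x,y}. \<forall>b\<in>{x,y}. \<forall>c. (a,c) \<in> r \<and> (c,b) \<in> r \<longrightarrow> c \<in> {x,y}"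
      using iv unfolding is_interval_def .
    then have "\<And>c. (x,c) \<in> r \<and> (c,y) \<in> r \<longrightarrow> c \<in> {x,y}" by simp
    then show ?thesis by auto
  qed
  show ?thesis using le unfolding s1 s2 by simp
qed

lemma mf_pair1:
  assumes ax: "is_axis C r" and C: "finite C" and xy: "x \<in> C" "y \<in> C"
  shows "cost_MF C {x,y} r \<le> 1"
proof -
  have le: "cost_MF C {x,y} r \<le> card {z \<in> {x,y}. (z,x) \<in> r \<or> (x,z) \<in> r} + card {z \<in> C - {x,y}. (x,z) \<in> r \<and> (z,x) \<in> r}"
    by (rule mf_le) (use C xy in auto)
  have s2: "{z \<in> C - {x,y}. (x,z) \<in> r \<and> (z,x) \<in> r} = {}"
    using axis_asym[OF ax] by blast
  have "{z \<in> {x,y}. (z,x) \<in> r \<or> (x,z) \<in> r} \<subseteq> {y}"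
    using axis_props[OF ax] unfolding irrefl_on_def by auto
  then have "card {z \<in> {x,y}. (z,x) \<in> r \<or> (x,z) \<in> r} \<le> card {y}" by (rule card_mono[rotated]) simp
  then show ?thesis using le unfolding s2 by simp
qed

lemma notreach:
  assumes "(u,v) \<in> trancl (coapp_rel C P)"
  shows "v \<notin> \<Union>(set P) \<Longrightarrow> u = v"
  using assms
proof (induction v rule: trancl_induct)
  case (base y)
  then show ?case unfolding coapp_rel_def by auto
next
  case (step y z)
  have "y = z" using step.hyps(2) step.prems unfolding coapp_rel_def by auto
  then show ?case using step.IH step.prems by simp
qed

lemma not_pc:
  assumes "finite C" "is_profile C P" "is_axis C r" "r \<in> f C P" "D \<in> coapp_partition C P"
    "\<not> is_interval r D"
  shows "\<not> partition_consistent f"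
proof
  assume pc: "partition_consistent f"
  have "r \<in> f C P \<longleftrightarrow> (\<forall>D \<in> coapp_partition C P. is_interval r D \<and>
              restrict_axis r D \<in> f D (restrict_profile D P))"
    using pc assms(1-3) unfolding partition_consistent_def by simp
  then have "is_interval r D" using assms(4,5) by simp
  then show False using assms(6) by simp
qed

lemma counter:
  fixes f :: "'a rule" and cost :: "'a costfun"
  assumes inf: "infinite (UNIV::'a set)"
  and fdef: "f = scoring_rule cost"
  and lower: "\<And>C r a b c d. finite C \<Longrightarrow> is_axis C r \<Longrightarrow> a \<in> C \<Longrightarrow> b \<in> C \<Longrightarrow> c \<in> C \<Longrightarrow> d \<in> C \<Longrightarrow>
     a \<noteq> b \<Longrightarrow> a \<noteq> c \<Longrightarrow> a \<noteq> d \<Longrightarrow> b \<noteq> c \<Longrightarrow> b \<noteq> d \<Longrightarrow> c \<noteq> d \<Longrightarrow>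
     1 \<le> cost C {a,b} r + (cost C {a,c} r + cost C {a,d} r)"
  and upper: "\<And>C r a b c d. finite C \<Longrightarrow> is_axis C r \<Longrightarrow> a \<in> C \<Longrightarrow> b \<in> C \<Longrightarrow> c \<in> C \<Longrightarrow> d \<in> C \<Longrightarrow>
     (b,a) \<in> r \<Longrightarrow> (a,c) \<in> r \<Longrightarrow> is_interval r {a,b} \<Longrightarrow> is_interval r {a,c} \<Longrightarrow>
     cost C {a,b} r + (cost C {a,c} r + cost C {a,d} r) \<le> 1"
  shows "\<not> partition_consistent f"
proof -
  obtain a :: 'a where True by simp
  obtain b :: 'a where b: "b \<notin> {a}" using ex_new_if_finite[OF inf, of "{a}"] by auto
  obtain c :: 'a where c: "c \<notin> {a,b}" using ex_new_if_finite[OF inf, of "{a,b}"] by auto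
  obtain d :: 'a where d: "d \<notin> {a,b,c}" using ex_new_if_finite[OF inf, of "{a,b,c}"] by auto
  obtain e :: 'a where e: "e \<notin> {a,b,c,d}" using ex_new_if_finite[OF inf, of "{a,b,c,d}"] by auto
  have dist: "a \<noteq> b" "a \<noteq> c" "a \<noteq> d" "b \<noteq> c" "b \<noteq> d" "c \<noteq> d" "e \<noteq> a" "e \<noteq> b" "e \<noteq> c" "e \<noteq> d"
    using b c d e by auto
  define C where "C = {a,b,c,d,e}"
  define P where "P = [{a,b},{a,c},{a,d}]"
  define rk :: "'a \<Rightarrow> nat" where "rk x = (if x = b then 0 else if x = a then 1 else if x = c then 2 else if x = e then 3 else 4)" for x
  define r where "r = {(x,y). x \<in> C \<and> y \<in> C \<and> rk x < rk y}"
  have rks: "rk b = 0" "rk a = 1" "rk c = 2" "rk e = 3" "rk d = 4" unfolding rk_def using dist by auto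
  have finC: "finite C" unfolding C_def by simp
  have mem: "a \<in> C" "b \<in> C" "c \<in> C" "d \<in> C" "e \<in> C" unfolding C_def by auto
  have inj: "inj_on rk C" unfolding inj_on_def C_def using rks dist by auto
  have ax: "is_axis C r" unfolding r_def by (rule rank_axis[OF inj])
  have prof: "is_profile C P" unfolding is_profile_def P_def C_def by auto
  have ba: "(b,a) \<in> r" "(a,c) \<in> r" "(a,e) \<in> r" "(e,d) \<in> r" unfolding r_def using mem rks by auto
  have rkC: "\<And>x. x \<in> C \<Longrightarrow> rk x = 0 \<or> rk x = 1 \<or> rk x = 2 \<or> rk x = 3 \<or> rk x = 4"
    unfolding C_def using rks by auto
  have i1: "is_interval r {a,b}" unfolding is_interval_def
  proof (intro ballI allI impI)
    fix x y z assume x: "x \<in> {a,b}" and y: "y \<in> {a,b}" and z: "(x,z) \<in> r \<and> (z,y) \<in> r"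
    then have "rk x < rk z" "rk z < rk y" unfolding r_def by auto
    moreover have "rk x \<le> 1" "rk y \<le> 1" using x y rks by auto
    ultimately show "z \<in> {a,b}" by simp
  qed
  have i2: "is_interval r {a,c}" unfolding is_interval_def
  proof (intro ballI allI impI)
    fix x y z assume x: "x \<in> {a,c}" and y: "y \<in> {a,c}" and z: "(x,z) \<in> r \<and> (z,y) \<in> r"
    then have "rk x < rk z" "rk z < rk y" unfolding r_def by auto
    moreover have "rk x \<ge> 1" "rk y \<le> 2" using x y rks by auto
    ultimately show "z \<in> {a,c}" by simp
  qed
  have sumP: "\<And>s. (\<Sum>A\<leftarrow>P. cost C A s) = cost C {a,b} s + (cost C {a,c} s + cost C {a,d} s)"
    unfolding P_def by simp
  have rin: "r \<in> f C P" unfolding fdef scoring_rule_def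
  proof (intro CollectI conjI allI impI ax)
    fix r' assume r': "is_axis C r'"
    have "(\<Sum>A\<leftarrow>P. cost C A r) \<le> 1" unfolding sumP
      by (rule upper[OF finC ax mem(1-4) ba(1,2) i1 i2])
    also have "1 \<le> (\<Sum>A\<leftarrow>P. cost C A r')" unfolding sumP
      by (rule lower[OF finC r' mem(1-4) dist(1-6)])
    finally show "(\<Sum>A\<leftarrow>P. cost C A r) \<le> (\<Sum>A\<leftarrow>P. cost C A r')" .
  qed
  define Rl where "Rl = trancl (coapp_rel C P)"
  have Din: "Rl``{a} \<in> coapp_partition C P" unfolding coapp_partition_def Rl_def
    by (rule quotientI[OF mem(1)])
  have aD: "a \<in> Rl``{a}" "d \<in> Rl``{a}"
  proof -
    have "(a,a) \<in> coapp_rel C P" "(a,d) \<in> coapp_rel C P" unfolding coapp_rel_def P_def using mem by auto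
    then show "a \<in> Rl``{a}" "d \<in> Rl``{a}" unfolding Rl_def by auto
  qed
  have eD: "e \<notin> Rl``{a}"
  proof
    assume "e \<in> Rl``{a}"
    then have "(a,e) \<in> trancl (coapp_rel C P)" unfolding Rl_def by simp
    moreover have "e \<notin> \<Union>(set P)" unfolding P_def using dist by auto
    ultimately have "a = e" using notreach by metis
    then show False using dist by simp
  qed
  have "\<not> is_interval r (Rl``{a})"
    unfolding is_interval_def using aD eD ba(3,4) by blast
  then show ?thesis by (rule not_pc[where f=f, OF finC prof ax rin Din])
qed

lemma VD_lower:
  assumes "finite C" "is_axis C r" "a \<in> C" "b \<in> C" "c \<in> C" "d \<in> C"
     "a \<noteq> b" "a \<noteq> c" "a \<noteq> d" "b \<noteq> c" "b \<noteq> d" "c \<noteq> d"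
  shows "1 \<le> cost_VD C {a,b} r + (cost_VD C {a,c} r + cost_VD C {a,d} r)"
proof (rule ccontr)
  assume "\<not> ?thesis"
  then have "is_interval r {a,b}" "is_interval r {a,c}" "is_interval r {a,d}"
    unfolding cost_VD_def by (auto split: if_splits)
  then show False using three_star[OF assms(2-12)] by simp
qed

lemma VD_upper:
  assumes "is_interval r {a,b}" "is_interval r {a,c}"
  shows "cost_VD C {a,b} r + (cost_VD C {a,c} r + cost_VD C {a,d} r) \<le> 1"
  using assms unfolding cost_VD_def by simp

lemma MF_lower:
  assumes "finite C" "is_axis C r" "a \<in> C" "b \<in> C" "c \<in> C" "d \<in> C"
     "a \<noteq> b" "a \<noteq> c" "a \<noteq> d" "b \<noteq> c" "b \<noteq> d" "c \<noteq> d"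
  shows "1 \<le> cost_MF C {a,b} r + (cost_MF C {a,c} r + cost_MF C {a,d} r)"
proof (cases "is_interval r {a,b} \<and> is_interval r {a,c} \<and> is_interval r {a,d}")
  case True
  then show ?thesis using three_star[OF assms(2-12)] by simp
next
  case False
  then consider "\<not> is_interval r {a,b}" | "\<not> is_interval r {a,c}" | "\<not> is_interval r {a,d}" by blast
  then show ?thesis
  proof cases
    case 1
    have "1 \<le> cost_MF C {a,b} r" by (rule mf_ge1[OF assms(2,1) _ _ 1]) (use assms in auto)
    then show ?thesis by simp
  next
    case 2
    have "1 \<le> cost_MF C {a,c} r" by (rule mf_ge1[OF assms(2,1) _ _ 2]) (use assms in auto)
    then show ?thesis by simp
  next
    case 3
    have "1 \<le> cost_MF C {a,d} r" by (rule mf_ge1[OF assms(2,1) _ _ 3]) (use assms in auto)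
    then show ?thesis by simp
  qed
qed

lemma MF_upper:
  assumes "finite C" "is_axis C r" "a \<in> C" "b \<in> C" "c \<in> C" "d \<in> C"
    "(b,a) \<in> r" "(a,c) \<in> r" "is_interval r {a,b}" "is_interval r {a,c}"
  shows "cost_MF C {a,b} r + (cost_MF C {a,c} r + cost_MF C {a,d} r) \<le> 1"
proof -
  have "cost_MF C {b,a} r = 0" by (rule mf_pair0[OF assms(2,1,4,3,7)]) (use assms(9) in \<open>simp add: insert_commute\<close>)
  then have 1: "cost_MF C {a,b} r = 0" by (simp add: insert_commute)
  have 2: "cost_MF C {a,c} r = 0" by (rule mf_pair0[OF assms(2,1,3,5,8,10)])
  have 3: "cost_MF C {a,d} r \<le> 1" by (rule mf_pair1[OF assms(2,1,3,6)])
  show ?thesis using 1 2 3 by simp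
qed

theorem mainTheorem19:
  assumes "infinite (UNIV :: 'a set)"
  shows "partition_consistent (BC :: 'a rule) \<and> partition_consistent (MS :: 'a rule)
       \<and> partition_consistent (FT :: 'a rule)
       \<and> \<not> partition_consistent (VD :: 'a rule) \<and> \<not> partition_consistent (MF :: 'a rule)"
proof (intro conjI)
  show "partition_consistent (BC :: 'a rule)" by (rule pc_BC)
  show "partition_consistent (MS :: 'a rule)" by (rule pc_MS)
  show "partition_consistent (FT :: 'a rule)" by (rule pc_FT)
  show "\<not> partition_consistent (VD :: 'a rule)"
    by (rule counter[OF assms VD_def]) ((rule VD_lower; assumption), (rule VD_upper; assumption))
  show "\<not> partition_consistent (MF :: 'a rule)"
    by (rule counter[OF assms MF_def]) ((rule MF_lower; assumption), (rule MF_upper; assumption))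
qed

end
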